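(* Let $d\rho_0$ be a probability measure on $\mathbb{R}$ with compact support, $c_1,\dots,c_k\in\mathbb{R}$, $\tfrac12 f'(x)=\sum_{j=1}^kc_jx^j$, and $d\rho_t=e^{\frac12 f'(x)t}d\rho_0/\int e^{\frac12 f'(x)t}d\rho_0$. Let $n\ge0$ be such that the support of $d\rho_0$ has at least $n+1$ points, let $P_n(x;t)$ be the $n$-th monic orthogonal polynomial of $d\rho_t$, $\|P_n\|$ its norm in $L^2(d\rho_t)$, and $J=J(t)$ the Jacobi matrix of $d\rho_t$. Then \[ \frac{d}{dt}\log\|P_n\|=\tfrac12\sum_{j=1}^kc_j\bigl[(J^j)_{n+1,\,n+1}-(J^j)_{1,1}\bigr]. \]
   Context: The Jacobi matrix $J$ (indices starting at $1$) has entries $J_{jk}=\langle p_{j-1},xp_{k-1}\rangle_{L^2(d\rho_t)}$ where $p_j=P_j/\|P_j\|$ are the orthonormal polynomials; it is tridiagonal with diagonal $b_1,b_2,\dots$ and off-diagonal $a_1,a_2,\dots>0$. *)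

theory Defs
  imports "HOL-Probability.Probability" "HOL-Computational_Algebra.Polynomial"
begin

definition msupp :: "real measure \<Rightarrow> real set" where
  "msupp M = {x. \<forall>e>0. emeasure M (ball x e) > 0}"

definition at_least_points :: "nat \<Rightarrow> 'a set \<Rightarrow> bool" where
  "at_least_points m S \<longleftrightarrow> (\<exists>A. A \<subseteq> S \<and> finite A \<and> card A = m)"

definition half_fprime :: "(nat \<Rightarrow> real) \<Rightarrow> nat \<Rightarrow> real \<Rightarrow> real" where
  "half_fprime c k x = (\<Sum>j=1..k. c j * x ^ j)"

definition rho_t :: "real measure \<Rightarrow> (nat \<Rightarrow> real) \<Rightarrow> nat \<Rightarrow> real \<Rightarrow> real measure" where
  "rho_t rho0 c k t =
     density rho0 (\<lambda>x. ennreal (exp (half_fprime c k x * t) /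
        (\<integral>y. exp (half_fprime c k y * t) \<partial>rho0)))"

definition poly_inner :: "real measure \<Rightarrow> real poly \<Rightarrow> real poly \<Rightarrow> real" where
  "poly_inner M p q = (\<integral>x. poly p x * poly q x \<partial>M)"

definition poly_L2norm :: "real measure \<Rightarrow> real poly \<Rightarrow> real" where
  "poly_L2norm M p = sqrt (poly_inner M p p)"

definition is_monic_orth_poly :: "real measure \<Rightarrow> nat \<Rightarrow> real poly \<Rightarrow> bool" where
  "is_monic_orth_poly M n P \<longleftrightarrow>
     degree P = n \<and> lead_coeff P = 1 \<and>
     (\<forall>q. degree q < n \<longrightarrow> poly_inner M P q = 0)"

(* the n-th monic orthogonal polynomial (unique when supp M has >= n+1 points) *)
definition monic_orth_poly :: "real measure \<Rightarrow> nat \<Rightarrow> real poly" where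
  "monic_orth_poly M n = (THE P. is_monic_orth_poly M n P)"

definition orthonormal_poly :: "real measure \<Rightarrow> nat \<Rightarrow> real poly" where
  "orthonormal_poly M n =
     smult (1 / poly_L2norm M (monic_orth_poly M n)) (monic_orth_poly M n)"

(* Jacobi matrix, indices starting at 1: J_{ij} = <p_{i-1}, x p_{j-1}>.
   The entry is defined (nonzero possibly) only for indices for which p_{i-1},
   p_{j-1} exist, i.e. the support has at least i resp. j points (if the support
   is finite with N points, J is the N x N Jacobi matrix, extended by zeros). *)
definition jacobi_matrix :: "real measure \<Rightarrow> nat \<Rightarrow> nat \<Rightarrow> real" where
  "jacobi_matrix M i j =
     (if 1 \<le> i \<and> 1 \<le> j \<and> at_least_points i (msupp M) \<and> at_least_points j (msupp M)
      then poly_inner M (orthonormal_poly M (i - 1)) ([:0, 1:] * orthonormal_poly M (j - 1))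
      else 0)"

definition mat_mult_inf :: "(nat \<Rightarrow> nat \<Rightarrow> real) \<Rightarrow> (nat \<Rightarrow> nat \<Rightarrow> real) \<Rightarrow> nat \<Rightarrow> nat \<Rightarrow> real" where
  "mat_mult_inf A B i j = (\<Sum>l. A i l * B l j)"

fun mat_pow_inf :: "(nat \<Rightarrow> nat \<Rightarrow> real) \<Rightarrow> nat \<Rightarrow> nat \<Rightarrow> nat \<Rightarrow> real" where
  "mat_pow_inf A 0 = (\<lambda>i j. if i = j then 1 else 0)"
| "mat_pow_inf A (Suc m) = mat_mult_inf (mat_pow_inf A m) A"

end

theory Submission
  imports Defs
begin

lemma at_least_points_iff:
  "at_least_points m S \<longleftrightarrow> (infinite S \<or> m \<le> card S)"
proof
  assume "at_least_points m S"
  then obtain A where A: "A \<subseteq> S" "finite A" "card A = m" unfolding at_least_points_def by blast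
  show "infinite S \<or> m \<le> card S"
  proof (cases "finite S")
    case True then show ?thesis using card_mono[OF True A(1)] A(3) by simp
  qed simp
next
  assume "infinite S \<or> m \<le> card S"
  then show "at_least_points m S"
  proof
    assume "infinite S"
    then obtain A where "finite A" "card A = m" "A \<subseteq> S" using infinite_arbitrarily_large[OF \<open>infinite S\<close>, of m] by blast
    then show ?thesis unfolding at_least_points_def by blast
  next
    assume "m \<le> card S"
    then obtain A where "A \<subseteq> S" "card A = m" "finite A" by (rule obtain_subset_with_card_n)
    then show ?thesis unfolding at_least_points_def by blast
  qed
qed

lemma at_least_points_mono: "at_least_points m S \<Longrightarrow> m' \<le> m \<Longrightarrow> at_least_points m' S"
  unfolding at_least_points_iff by auto

locale opm =
  fixes M :: "real measure"
  assumes fin: "finite_measure M"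
    and sets_M: "sets M = sets borel"
    and cpt: "compact (msupp M)"
begin

lemma space_M: "space M = UNIV"
  using sets_eq_imp_space_eq[OF sets_M] by simp

lemma meas_M: "f \<in> borel_measurable borel \<Longrightarrow> f \<in> borel_measurable M"
  using measurable_cong_sets[OF sets_M refl] by blast

lemma meas_cont: "continuous_on UNIV f \<Longrightarrow> (f::real\<Rightarrow>real) \<in> borel_measurable M"
  by (intro meas_M borel_measurable_continuous_onI)

lemma AE_supp: "AE x in M. x \<in> msupp M"
proof -
  define F where "F = {ball x e |x e. e > 0 \<and> emeasure M (ball x e) = 0}"
  have "\<And>S. S \<in> F \<Longrightarrow> open S" unfolding F_def by auto
  then obtain F' where F': "F' \<subseteq> F" "countable F'" "\<Union>F' = \<Union>F" by (rule Lindelof)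
  have cov: "- msupp M \<subseteq> \<Union>F"
  proof
    fix x assume "x \<in> - msupp M"
    then obtain e where "e > 0" "\<not> emeasure M (ball x e) > 0" unfolding msupp_def by auto
    then have "ball x e \<in> F" unfolding F_def by (auto simp: not_less)
    then show "x \<in> \<Union>F" using \<open>e > 0\<close> by (intro UnionI[of "ball x e"]) auto
  qed
  have "\<Union>F' \<in> null_sets M"
  proof -
    have "\<Union>F' = \<Union>(id ` F')" by simp
    also have "\<dots> \<in> null_sets M"
    proof (rule null_sets_UN')
      show "countable F'" by fact
      fix S assume "S \<in> F'"
      then have "S \<in> F" using F' by auto
      then obtain x e where "S = ball x e" "emeasure M (ball x e) = 0" unfolding F_def by auto
      moreover have "ball x e \<in> sets M" using sets_M by simp
      ultimately show "id S \<in> null_sets M" by (simp add: null_setsI)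
    qed
    finally show ?thesis .
  qed
  then show ?thesis
  proof (rule AE_I')
    show "{x \<in> space M. \<not> x \<in> msupp M} \<subseteq> \<Union>F'" using cov unfolding F'(3) by blast
  qed
qed

lemma bounded_on_supp:
  assumes "continuous_on UNIV (f::real\<Rightarrow>real)"
  obtains B where "B \<ge> 0" "\<And>x. x \<in> msupp M \<Longrightarrow> \<bar>f x\<bar> \<le> B"
proof -
  have "compact (f ` msupp M)"
    using assms cpt by (intro compact_continuous_image) (auto intro: continuous_on_subset)
  then have "bounded (f ` msupp M)" by (rule compact_imp_bounded)
  then obtain B where "B > 0" "\<forall>y \<in> f ` msupp M. norm y \<le> B"
    unfolding bounded_pos by blast
  then show ?thesis using that[of B] by auto
qed

lemma integrable_cont:
  assumes "continuous_on UNIV (f::real\<Rightarrow>real)"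
  shows "integrable M f"
proof -
  obtain B where B: "\<And>x. x \<in> msupp M \<Longrightarrow> \<bar>f x\<bar> \<le> B"
    using bounded_on_supp[OF assms] by blast
  have "AE x in M. norm (f x) \<le> B"
    using AE_supp by eventually_elim (use B in auto)
  then show ?thesis
    by (rule finite_measure.integrable_const_bound[OF fin _ meas_cont[OF assms]])
qed

end

lemma poly_sub_lead_degree:
  fixes q P :: "real poly"
  assumes "degree P = degree q" "lead_coeff P = 1"
  shows "q - smult (lead_coeff q) P = 0 \<or> degree (q - smult (lead_coeff q) P) < degree q"
proof -
  let ?r = "q - smult (lead_coeff q) P"
  have c: "coeff ?r (degree q) = 0" using assms by simp
  have d: "degree ?r \<le> degree q"
    using degree_diff_le[of q "degree q" "smult (lead_coeff q) P"] assms by simp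
  show ?thesis
  proof (cases "?r = 0")
    case False
    then have "degree ?r \<noteq> degree q" using c leading_coeff_0_iff by metis
    then show ?thesis using d by simp
  qed simp
qed

context opm
begin

lemma int_poly2: "integrable M (\<lambda>x. poly p x * poly q x)"
  by (rule integrable_cont) (intro continuous_intros)

lemma ip_sym: "poly_inner M p q = poly_inner M q p"
  unfolding poly_inner_def by (simp add: mult.commute)

lemma ip_add_left: "poly_inner M (p + q) r = poly_inner M p r + poly_inner M q r"
  unfolding poly_inner_def using int_poly2[of p r] int_poly2[of q r]
  by (simp add: distrib_right)

lemma ip_smult_left: "poly_inner M (smult a p) r = a * poly_inner M p r"
  unfolding poly_inner_def by (simp add: mult.assoc)

lemma ip_diff_left: "poly_inner M (p - q) r = poly_inner M p r - poly_inner M q r"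
  unfolding poly_inner_def using int_poly2[of p r] int_poly2[of q r]
  by (simp add: left_diff_distrib)

lemma ip_zero_left[simp]: "poly_inner M 0 r = 0"
  unfolding poly_inner_def by simp

lemma ip_zero_right[simp]: "poly_inner M r 0 = 0"
  unfolding poly_inner_def by simp

lemma ip_sum_left: "poly_inner M (\<Sum>i\<in>A. f i) r = (\<Sum>i\<in>A. poly_inner M (f i) r)"
proof (induction A rule: infinite_finite_induct)
  case (insert x F)
  then show ?case by (simp add: ip_add_left)
qed simp_all

lemma ip_add_right: "poly_inner M r (p + q) = poly_inner M r p + poly_inner M r q"
  unfolding poly_inner_def using int_poly2[of r p] int_poly2[of r q]
  by (simp add: distrib_left)
lemma ip_smult_right: "poly_inner M r (smult a p) = a * poly_inner M r p"
  unfolding poly_inner_def by (simp add: ac_simps)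
lemma ip_diff_right: "poly_inner M r (p - q) = poly_inner M r p - poly_inner M r q"
  unfolding poly_inner_def using int_poly2[of r p] int_poly2[of r q]
  by (simp add: right_diff_distrib)
lemma ip_sum_right: "poly_inner M r (\<Sum>i\<in>A. f i) = (\<Sum>i\<in>A. poly_inner M r (f i))"
proof (induction A rule: infinite_finite_induct)
  case (insert x F)
  then show ?case by (simp add: ip_add_right)
qed simp_all

lemma ip_shift: "poly_inner M (h * p) q = poly_inner M p (h * q)"
  unfolding poly_inner_def by (simp add: ac_simps)

lemma ip_nonneg: "poly_inner M p p \<ge> 0"
  unfolding poly_inner_def by simp

lemma ip_pos:
  assumes "p \<noteq> 0" "at_least_points (degree p + 1) (msupp M)"
  shows "poly_inner M p p > 0"
proof -
  obtain A where A: "A \<subseteq> msupp M" "finite A" "card A = degree p + 1"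
    using assms(2) unfolding at_least_points_def by blast
  have "\<not> A \<subseteq> {x. poly p x = 0}"
  proof
    assume "A \<subseteq> {x. poly p x = 0}"
    then have "card A \<le> card {x. poly p x = 0}"
      using poly_roots_finite[OF assms(1)] card_mono by blast
    then show False using card_poly_roots_bound[OF assms(1)] A(3) by simp
  qed
  then obtain x where x: "x \<in> msupp M" "poly p x \<noteq> 0" using A(1) by blast
  have "continuous (at x) (poly p)" by (intro continuous_intros)
  then obtain e where e: "e > 0" "\<And>y. dist x y < e \<Longrightarrow> poly p y \<noteq> 0"
    using continuous_at_avoid[of x "poly p" 0] x(2) by blast
  have pos: "emeasure M (ball x e) > 0" using x(1) e(1) unfolding msupp_def by blast
  show ?thesis
  proof (rule ccontr)
    assume "\<not> poly_inner M p p > 0"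
    then have "poly_inner M p p = 0" using ip_nonneg[of p] by simp
    then have "AE y in M. poly p y * poly p y = 0"
      unfolding poly_inner_def using integral_nonneg_eq_0_iff_AE[OF int_poly2[of p p]] by simp
    then have "AE y in M. y \<notin> ball x e"
      by eventually_elim (use e in auto)
    moreover have "ball x e \<in> sets M" using sets_M by simp
    moreover have "{y \<in> space M. \<not> (y \<notin> ball x e)} = ball x e" using space_M by auto
    ultimately have "emeasure M (ball x e) = 0"
      using AE_iff_measurable[of "ball x e" M "\<lambda>y. y \<notin> ball x e"] by blast
    then show False using pos by simp
  qed
qed

lemma orth_all:
  assumes P: "\<And>r. r < m \<Longrightarrow> degree (P r) = r \<and> lead_coeff (P r) = 1"
    and orth: "\<And>r. r < m \<Longrightarrow> poly_inner M Q (P r) = 0"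
  shows "degree q < m \<Longrightarrow> poly_inner M Q q = 0"
proof (induction "degree q" arbitrary: q rule: less_induct)
  case less
  show ?case
  proof (cases "q = 0")
    case False
    let ?d = "degree q"
    let ?r = "q - smult (lead_coeff q) (P ?d)"
    have Pd0: "degree (P ?d) = ?d \<and> lead_coeff (P ?d) = 1" using P less.prems by blast
    then have Pd: "degree (P ?d) = ?d" "lead_coeff (P ?d) = 1" by blast+
    have rd: "?r = 0 \<or> degree ?r < ?d" using poly_sub_lead_degree[OF Pd] .
    have r0: "poly_inner M Q ?r = 0"
    proof (cases "?r = 0")
      case False
      then have "degree ?r < ?d" using rd by blast
      then show ?thesis by (rule less.hyps) (use \<open>degree ?r < ?d\<close> less.prems in linarith)
    qed simp
    have "poly_inner M Q q = poly_inner M Q (?r + smult (lead_coeff q) (P ?d))" by simp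
    also have "\<dots> = poly_inner M Q ?r + lead_coeff q * poly_inner M Q (P ?d)"
      by (simp only: ip_add_right ip_smult_right)
    also have "\<dots> = 0" using r0 orth[of ?d] less.prems by simp
    finally show ?thesis .
  qed simp
qed

lemma mop_unique:
  assumes "at_least_points (m + 1) (msupp M)"
    and "is_monic_orth_poly M m P" "is_monic_orth_poly M m Q"
  shows "P = Q"
proof (rule ccontr)
  assume ne: "P \<noteq> Q"
  let ?D = "P - Q"
  have dP: "degree P = m" "lead_coeff P = 1" and dQ: "degree Q = m" "lead_coeff Q = 1"
    using assms(2,3) unfolding is_monic_orth_poly_def by auto
  have "?D \<noteq> 0" using ne by simp
  have c: "coeff ?D m = 0" using dP dQ by simp
  have "degree ?D \<le> m" using degree_diff_le[of P m Q] dP dQ by simp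
  moreover have "degree ?D \<noteq> m" using c \<open>?D \<noteq> 0\<close> leading_coeff_0_iff by metis
  ultimately have dD: "degree ?D < m" by simp
  have "poly_inner M P ?D = 0" "poly_inner M Q ?D = 0"
    using assms(2,3) dD unfolding is_monic_orth_poly_def by auto
  then have "poly_inner M ?D ?D = 0" by (simp add: ip_diff_left)
  moreover have "poly_inner M ?D ?D > 0"
    using ip_pos[OF \<open>?D \<noteq> 0\<close>] at_least_points_mono[OF assms(1)] dD by simp
  ultimately show False by simp
qed

lemma mop_exists:
  "at_least_points (m + 1) (msupp M) \<Longrightarrow> is_monic_orth_poly M m (monic_orth_poly M m)"
proof (induction m rule: less_induct)
  case (less m)
  define P where "P r = monic_orth_poly M r" for r
  have IH: "is_monic_orth_poly M r (P r)" if "r < m" for r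
    unfolding P_def using less.IH[OF that] at_least_points_mono[OF less.prems] that by simp
  have Pd: "degree (P r) = r \<and> lead_coeff (P r) = 1" if "r < m" for r
    using IH[OF that] unfolding is_monic_orth_poly_def by blast
  have Pne: "P r \<noteq> 0" if "r < m" for r using Pd[OF that] by auto
  have Ppos: "poly_inner M (P r) (P r) > 0" if "r < m" for r
    using ip_pos[OF Pne[OF that]] Pd[OF that] at_least_points_mono[OF less.prems] that by simp
  have Porth: "poly_inner M (P s) (P r) = 0" if "r < m" "s < m" "s \<noteq> r" for r s
  proof (cases "s < r")
    case True
    have "\<forall>q. degree q < r \<longrightarrow> poly_inner M (P r) q = 0"
      using IH[OF that(1)] unfolding is_monic_orth_poly_def by blast
    then have "poly_inner M (P r) (P s) = 0" using Pd[OF that(2)] True by simp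
    then show ?thesis by (simp add: ip_sym)
  next
    case False
    then have "r < s" using that by simp
    have "\<forall>q. degree q < s \<longrightarrow> poly_inner M (P s) q = 0"
      using IH[OF that(2)] unfolding is_monic_orth_poly_def by blast
    then show ?thesis using Pd[OF that(1)] \<open>r < s\<close> by simp
  qed
  define cf where "cf r = poly_inner M (monom 1 m) (P r) / poly_inner M (P r) (P r)" for r
  define R where "R = (\<Sum>r<m. smult (cf r) (P r))"
  define Q where "Q = monom 1 m - R"
  have dR: "R = 0 \<or> degree R < m"
  proof (cases "m = 0")
    case False
    have "degree R < m" unfolding R_def
      by (rule degree_sum_less) (use False Pd in \<open>auto intro: le_less_trans[OF degree_smult_le]\<close>)
    then show ?thesis by simp
  qed (simp add: R_def)
  have cR: "coeff R m = 0" using dR coeff_eq_0 by auto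
  have dQ: "degree Q = m"
  proof -
    have dm: "degree (monom (1::real) m) = m" by (simp add: degree_monom_eq)
    have "degree (monom (1::real) m + - R) = m"
    proof (cases "R = 0")
      case False
      then have "degree (- R) < degree (monom (1::real) m)" using dR dm by simp
      then show ?thesis using degree_add_eq_left dm by metis
    qed (simp add: dm)
    then show ?thesis unfolding Q_def by simp
  qed
  have lQ: "lead_coeff Q = 1" using dQ cR unfolding Q_def by (simp add: coeff_monom)
  have oQ: "poly_inner M Q (P r) = 0" if "r < m" for r
  proof -
    have "poly_inner M R (P r) = (\<Sum>s<m. cf s * poly_inner M (P s) (P r))"
      unfolding R_def by (simp add: ip_sum_left ip_smult_left)
    also have "\<dots> = (\<Sum>s\<in>{r}. cf s * poly_inner M (P s) (P r))"
      by (rule sum.mono_neutral_right) (use that Porth in auto)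
    also have "\<dots> = poly_inner M (monom 1 m) (P r)"
      using Ppos[OF that] by (simp add: cf_def)
    finally show ?thesis unfolding Q_def by (simp add: ip_diff_left)
  qed
  have "is_monic_orth_poly M m Q"
    unfolding is_monic_orth_poly_def using dQ lQ orth_all[OF Pd oQ] by auto
  then have ex: "\<exists>Q. is_monic_orth_poly M m Q" by blast
  have "\<exists>!Q. is_monic_orth_poly M m Q"
    using ex mop_unique[OF less.prems] by blast
  then show ?case unfolding monic_orth_poly_def by (rule theI')
qed

end

context opm
begin

abbreviation "alp r \<equiv> at_least_points r (msupp M)"
abbreviation "MOP m \<equiv> monic_orth_poly M m"
abbreviation "ONP m \<equiv> orthonormal_poly M m"

lemma mop:
  assumes "alp (m + 1)"
  shows "degree (MOP m) = m" "lead_coeff (MOP m) = 1"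
    "\<And>q. degree q < m \<Longrightarrow> poly_inner M (MOP m) q = 0"
  using mop_exists[OF assms] unfolding is_monic_orth_poly_def by blast+

lemma mop_ne: "alp (m + 1) \<Longrightarrow> MOP m \<noteq> 0"
  using mop(2) by force

lemma mop_ip_pos: "alp (m + 1) \<Longrightarrow> poly_inner M (MOP m) (MOP m) > 0"
  using ip_pos[OF mop_ne] mop(1) by metis

lemma mop_norm_pos: "alp (m + 1) \<Longrightarrow> poly_L2norm M (MOP m) > 0"
  unfolding poly_L2norm_def using mop_ip_pos by simp

lemma mop_norm_sq: "(poly_L2norm M p)\<^sup>2 = poly_inner M p p"
  unfolding poly_L2norm_def using ip_nonneg by simp

lemma onp_def': "ONP m = smult (1 / poly_L2norm M (MOP m)) (MOP m)"
  by (simp add: orthonormal_poly_def)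

lemma onp_degree: "alp (m + 1) \<Longrightarrow> degree (ONP m) = m"
  unfolding onp_def' using mop_norm_pos[of m] mop(1)[of m] by simp

lemma onp_ne: "alp (m + 1) \<Longrightarrow> ONP m \<noteq> 0"
  unfolding onp_def' using mop_norm_pos[of m] mop_ne[of m] by simp

lemma onp_coeff: "alp (m + 1) \<Longrightarrow> coeff (ONP m) m = 1 / poly_L2norm M (MOP m)"
  unfolding onp_def' using mop(1,2)[of m] by simp

lemma onp_orth: "alp (m + 1) \<Longrightarrow> degree q < m \<Longrightarrow> poly_inner M (ONP m) q = 0"
  unfolding onp_def' using mop(3)[of m q] by (simp add: ip_smult_left)

lemma onp_orthonormal:
  assumes "alp (i + 1)" "alp (j + 1)"
  shows "poly_inner M (ONP i) (ONP j) = (if i = j then 1 else 0)"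
proof (cases "i = j")
  case True
  have n: "poly_L2norm M (MOP i) > 0" using mop_norm_pos[OF assms(1)] .
  have "poly_inner M (ONP i) (ONP i) = (1 / poly_L2norm M (MOP i))^2 * (poly_L2norm M (MOP i))\<^sup>2"
    unfolding onp_def' mop_norm_sq by (simp add: ip_smult_left ip_smult_right power2_eq_square)
  also have "\<dots> = 1" using n by (simp add: field_simps)
  finally show ?thesis using True by simp
next
  case False
  show ?thesis
  proof (cases "i < j")
    case True
    have "poly_inner M (ONP j) (ONP i) = 0"
      using onp_orth[OF assms(2), of "ONP i"] onp_degree[OF assms(1)] True by simp
    then show ?thesis using False by (simp add: ip_sym)
  next
    case F2: False
    then have "j < i" using False by simp
    then show ?thesis using onp_orth[OF assms(1), of "ONP j"] onp_degree[OF assms(2)] False by simp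
  qed
qed

lemma span_exists:
  "alp (d + 1) \<Longrightarrow> degree q \<le> d \<Longrightarrow> \<exists>a. q = (\<Sum>r\<le>d. smult (a r) (ONP r))"
proof (induction d arbitrary: q)
  case 0
  define b where "b = coeff q 0 * poly_L2norm M (MOP 0)"
  let ?q' = "q - smult b (ONP 0)"
  have "coeff ?q' 0 = 0"
    using onp_coeff[OF 0(1)] mop_norm_pos[OF 0(1)] by (simp add: b_def)
  moreover have "degree ?q' = 0"
    using degree_diff_le[of q 0 "smult b (ONP 0)"] 0 onp_degree[OF 0(1)] by simp
  ultimately have "?q' = 0" using leading_coeff_0_iff by metis
  then have "q = (\<Sum>r\<le>0. smult ((\<lambda>_. b) r) (ONP r))" by simp
  then show ?case by (rule exI[of _ "\<lambda>_. b"])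
next
  case (Suc d)
  define b where "b = coeff q (Suc d) * poly_L2norm M (MOP (Suc d))"
  let ?q' = "q - smult b (ONP (Suc d))"
  have c: "coeff ?q' (Suc d) = 0"
    using onp_coeff[OF Suc(2)] mop_norm_pos[OF Suc(2)] by (simp add: b_def)
  have dq: "degree ?q' \<le> Suc d"
    using degree_diff_le[of q "Suc d" "smult b (ONP (Suc d))"] Suc onp_degree[OF Suc(2)] by simp
  have "degree ?q' \<le> d"
  proof (rule degree_le, intro allI impI)
    fix i assume "d < i"
    show "coeff ?q' i = 0"
    proof (cases "i = Suc d")
      case False
      then have "i > Suc d" using \<open>d < i\<close> by simp
      then show ?thesis using dq coeff_eq_0 by (meson le_less_trans)
    qed (use c in simp)
  qed
  moreover have "alp (d + 1)" using at_least_points_mono[OF Suc(2)] by simp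
  ultimately obtain a where a: "?q' = (\<Sum>r\<le>d. smult (a r) (ONP r))" using Suc.IH by blast
  define a' where "a' = a(Suc d := b)"
  have "q = ?q' + smult b (ONP (Suc d))" by simp
  also have "\<dots> = (\<Sum>r\<le>d. smult (a r) (ONP r)) + smult b (ONP (Suc d))"
    by (simp only: a)
  also have "(\<Sum>r\<le>d. smult (a r) (ONP r)) = (\<Sum>r\<le>d. smult (a' r) (ONP r))"
    by (rule sum.cong[OF refl]) (simp add: a'_def)
  also have "b = a' (Suc d)" by (simp add: a'_def)
  also have "(\<Sum>r\<le>d. smult (a' r) (ONP r)) + smult (a' (Suc d)) (ONP (Suc d))
      = (\<Sum>r\<le>Suc d. smult (a' r) (ONP r))" by (simp only: sum.atMost_Suc)
  finally show ?case by blast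
qed

lemma span:
  assumes "alp (d + 1)" "degree q \<le> d"
  shows "q = (\<Sum>r\<le>d. smult (poly_inner M (ONP r) q) (ONP r))"
proof -
  obtain a where a: "q = (\<Sum>r\<le>d. smult (a r) (ONP r))" using span_exists[OF assms] by blast
  have ar: "alp (r + 1)" if "r \<le> d" for r by (rule at_least_points_mono[OF assms(1)]) (use that in simp)
  have "poly_inner M (ONP s) q = a s" if "s \<le> d" for s
  proof -
    have as: "alp (s + 1)" using at_least_points_mono[OF assms(1)] that by simp
    have "poly_inner M (ONP s) q = (\<Sum>r\<le>d. a r * poly_inner M (ONP s) (ONP r))"
      by (subst a) (simp add: ip_sum_right ip_smult_right)
    also have "\<dots> = (\<Sum>r\<le>d. if r = s then a r else 0)"
      by (rule sum.cong[OF refl])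
        (use onp_orthonormal[OF as] ar in auto)
    also have "\<dots> = a s" using that by simp
    finally show ?thesis .
  qed
  then show ?thesis by (subst a) (intro sum.cong refl, simp)
qed

lemma parseval_full:
  assumes "alp (degree q + 1)"
  shows "poly_inner M h q = (\<Sum>r\<le>degree q. poly_inner M h (ONP r) * poly_inner M (ONP r) q)"
proof -
  have "poly_inner M h q = poly_inner M h (\<Sum>r\<le>degree q. smult (poly_inner M (ONP r) q) (ONP r))"
    using span[OF assms order.refl] by simp
  also have "\<dots> = (\<Sum>r\<le>degree q. poly_inner M h (ONP r) * poly_inner M (ONP r) q)"
    by (simp add: ip_sum_right ip_smult_right mult.commute)
  finally show ?thesis .
qed

lemma fin_supp_reduce:
  assumes "finite (msupp M)" "msupp M \<noteq> {}"
  shows "\<exists>q2. degree q2 < card (msupp M) \<and> (AE x in M. poly q x = poly q2 x)"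
proof -
  define W where "W = (\<Prod>s\<in>msupp M. [:-s, 1:])"
  have W0: "W \<noteq> 0" unfolding W_def using assms(1) by (simp add: prod_zero_iff)
  have "degree W \<le> (\<Sum>s\<in>msupp M. degree [:-s, 1::real:])"
    unfolding W_def using degree_prod_sum_le[OF assms(1), of "\<lambda>s. [:-s, 1::real:]"]
    by (simp only: o_def)
  moreover have "(\<Sum>s\<in>msupp M. degree [:-s, 1::real:]) = card (msupp M)" by simp
  ultimately have dW: "degree W \<le> card (msupp M)" by simp
  have cpos: "card (msupp M) > 0" using assms by (simp add: card_gt_0_iff)
  define q2 where "q2 = q mod W"
  have "degree q2 < card (msupp M)"
    using degree_mod_less[OF W0, of q] dW cpos unfolding q2_def by auto
  moreover have "AE x in M. poly q x = poly q2 x"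
    using AE_supp
  proof eventually_elim
    case (elim x)
    have "poly W x = 0" unfolding W_def poly_prod using assms(1) elim
      by (auto intro!: prod_zero)
    have e: "q = q div W * W + q mod W" by simp
    have "poly q x = poly (q div W * W + q mod W) x" using arg_cong[OF e, of "\<lambda>p. poly p x"] .
    also have "\<dots> = poly (q div W) x * poly W x + poly (q mod W) x" by (simp only: poly_add poly_mult)
    also have "\<dots> = poly q2 x" using \<open>poly W x = 0\<close> by (simp add: q2_def)
    finally show ?case .
  qed
  ultimately show ?thesis by blast
qed

lemma ip_cong_AE:
  assumes "AE x in M. poly q x = poly q2 x"
  shows "poly_inner M h q = poly_inner M h q2"
proof -
  have m1: "(\<lambda>x. poly h x * poly q x) \<in> borel_measurable M"
    by (rule meas_cont) (intro continuous_intros)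
  have m2: "(\<lambda>x. poly h x * poly q2 x) \<in> borel_measurable M"
    by (rule meas_cont) (intro continuous_intros)
  have "AE x in M. poly h x * poly q x = poly h x * poly q2 x"
    using assms by eventually_elim simp
  then show ?thesis unfolding poly_inner_def by (rule integral_cong_AE[OF m1 m2])
qed

lemma parseval:
  assumes "alp 1"
  shows "poly_inner M h q =
    (\<Sum>r\<in>{r. r \<le> degree q \<and> alp (r + 1)}. poly_inner M h (ONP r) * poly_inner M (ONP r) q)"
proof (cases "alp (degree q + 1)")
  case True
  have e: "{r. r \<le> degree q \<and> alp (r + 1)} = {..degree q}"
  proof -
    have "alp (r + 1)" if "r \<le> degree q" for r by (rule at_least_points_mono[OF True]) (use that in simp)
    then show ?thesis by auto
  qed
  show ?thesis unfolding e by (rule parseval_full[OF True])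
next
  case False
  then have fin: "finite (msupp M)" and lt: "card (msupp M) < degree q + 1"
    unfolding at_least_points_iff by auto
  define N where "N = card (msupp M)"
  have N1: "N \<ge> 1" using assms fin unfolding at_least_points_iff N_def by auto
  then have ne: "msupp M \<noteq> {}" using fin unfolding N_def by auto
  obtain q2 where q2: "degree q2 < N" "AE x in M. poly q x = poly q2 x"
    using fin_supp_reduce[OF fin ne, of q] unfolding N_def by blast
  have aN: "alp (N - 1 + 1)" using N1 unfolding at_least_points_iff N_def by auto
  have sp: "q2 = (\<Sum>r\<le>N - 1. smult (poly_inner M (ONP r) q2) (ONP r))"
    using span[OF aN] q2(1) by simp
  have set: "{r. r \<le> degree q \<and> alp (r + 1)} = {..N - 1}"
    using fin lt N1 unfolding at_least_points_iff N_def by auto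
  have "poly_inner M h q = poly_inner M h q2" using ip_cong_AE[OF q2(2)] .
  also have "\<dots> = (\<Sum>r\<le>N - 1. poly_inner M h (ONP r) * poly_inner M (ONP r) q2)"
    by (subst sp) (simp add: ip_sum_right ip_smult_right mult.commute)
  also have "\<dots> = (\<Sum>r\<le>N - 1. poly_inner M h (ONP r) * poly_inner M (ONP r) q)"
    using ip_cong_AE[OF q2(2)] by simp
  finally show ?thesis using set by simp
qed

end

context opm
begin

lemma J_pow:
  assumes "1 \<le> j"
  shows "\<forall>i l. mat_pow_inf (jacobi_matrix M) j i l =
    (if 1 \<le> i \<and> 1 \<le> l \<and> alp i \<and> alp l
     then poly_inner M (ONP (i - 1)) ([:0,1:]^j * ONP (l - 1)) else 0)"
  using assms
proof (induction j rule: nat_induct_at_least)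
  case base
  show ?case
  proof (intro allI)
    fix i l
    have "mat_pow_inf (jacobi_matrix M) 1 i l
        = (\<Sum>r. (if i = r then 1 else 0) * jacobi_matrix M r l)"
      by (simp add: mat_mult_inf_def)
    also have "\<dots> = (\<Sum>r\<in>{i}. (if i = r then 1 else 0) * jacobi_matrix M r l)"
      by (rule suminf_finite) auto
    also have "\<dots> = jacobi_matrix M i l" by simp
    finally show "mat_pow_inf (jacobi_matrix M) 1 i l =
      (if 1 \<le> i \<and> 1 \<le> l \<and> alp i \<and> alp l
       then poly_inner M (ONP (i - 1)) ([:0,1:]^1 * ONP (l - 1)) else 0)"
      unfolding jacobi_matrix_def by simp
  qed
next
  case (Suc j)
  show ?case
  proof (intro allI)
    fix i l
    define X :: "real poly" where "X = [:0,1:]"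
    let ?J = "jacobi_matrix M"
    have eq: "mat_pow_inf ?J (Suc j) i l = (\<Sum>r. mat_pow_inf ?J j i r * ?J r l)"
      by (simp add: mat_mult_inf_def)
    show "mat_pow_inf ?J (Suc j) i l =
      (if 1 \<le> i \<and> 1 \<le> l \<and> alp i \<and> alp l
       then poly_inner M (ONP (i - 1)) ([:0,1:]^Suc j * ONP (l - 1)) else 0)"
    proof (cases "1 \<le> i \<and> 1 \<le> l \<and> alp i \<and> alp l")
      case False
      have "mat_pow_inf ?J j i r * ?J r l = 0" for r
        using False Suc.IH unfolding jacobi_matrix_def by auto
      then have "(\<lambda>r. mat_pow_inf ?J j i r * ?J r l) = (\<lambda>r. 0)" by (rule ext)
      then have r: "mat_pow_inf ?J (Suc j) i l = 0" using eq by simp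
      show ?thesis by (subst if_not_P[OF False]) (rule r)
    next
      case True
      have al: "alp (l - 1 + 1)" using True by simp
      have a1: "alp 1" by (rule at_least_points_mono[of l]) (use True in simp_all)
      have dq: "degree (X * ONP (l - 1)) = l"
        using onp_ne[OF al] onp_degree[OF al] True unfolding X_def
        by (subst degree_mult_eq) auto
      define A where "A = {r. r \<le> l \<and> alp (r + 1)}"
      have finA: "finite A" unfolding A_def by simp
      define T where "T r = poly_inner M (ONP (i - 1)) (X^j * ONP r) *
          poly_inner M (ONP r) (X * ONP (l - 1))" for r
      have trm: "mat_pow_inf ?J j i r * ?J r l = (if r \<in> Suc ` A then T (r - 1) else 0)" for r
      proof (cases r)
        case 0
        then show ?thesis using Suc.IH unfolding jacobi_matrix_def by auto
      next
        case (Suc r')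
        show ?thesis
        proof (cases "alp (r' + 1)")
          case False
          then show ?thesis using Suc \<open>r = Suc r'\<close> unfolding jacobi_matrix_def A_def by auto
        next
          case aT: True
          have v: "mat_pow_inf ?J j i r * ?J r l = T r'"
            using Suc.IH True aT \<open>r = Suc r'\<close> unfolding jacobi_matrix_def T_def X_def by simp
          show ?thesis
          proof (cases "r' \<le> l")
            case True
            then show ?thesis using v aT \<open>r = Suc r'\<close> unfolding A_def by auto
          next
            case False
            have "poly_inner M (ONP r') (X * ONP (l - 1)) = 0"
              using onp_orth[OF aT] dq False by simp
            then show ?thesis using v \<open>r = Suc r'\<close> False unfolding T_def A_def by auto
          qed
        qed
      qed
      have "(\<Sum>r. mat_pow_inf ?J j i r * ?J r l) = (\<Sum>r\<in>Suc ` A. mat_pow_inf ?J j i r * ?J r l)"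
        by (rule suminf_finite) (use finA trm in auto)
      also have "\<dots> = (\<Sum>r\<in>Suc ` A. T (r - 1))"
        by (rule sum.cong[OF refl]) (simp add: trm)
      also have "\<dots> = (\<Sum>r\<in>A. T r)"
        by (subst sum.reindex) auto
      also have "\<dots> = (\<Sum>r\<in>A. poly_inner M (X^j * ONP (i - 1)) (ONP r) *
          poly_inner M (ONP r) (X * ONP (l - 1)))"
        unfolding T_def by (simp add: ip_shift)
      also have "\<dots> = poly_inner M (X^j * ONP (i - 1)) (X * ONP (l - 1))"
        using parseval[OF a1, of "X^j * ONP (i - 1)" "X * ONP (l - 1)"] dq unfolding A_def by simp
      also have "\<dots> = poly_inner M (ONP (i - 1)) (X^Suc j * ONP (l - 1))"
        by (simp add: ip_shift power_Suc2 mult.assoc mult.left_commute)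
      finally show ?thesis using eq True unfolding X_def by simp
    qed
  qed
qed

end

lemma exp_taylor2: "\<bar>exp y - 1 - y\<bar> \<le> y\<^sup>2 * exp \<bar>y\<bar>" for y :: real
proof -
  obtain t where t: "\<bar>t\<bar> \<le> \<bar>y\<bar>" "exp y = (\<Sum>m<2. y ^ m / fact m) + exp t / fact 2 * y ^ 2"
    using Maclaurin_exp_le[of y 2] by blast
  have e: "exp y - 1 - y = exp t / 2 * y\<^sup>2" using t(2) by (simp add: eval_nat_numeral)
  have "exp t \<le> exp \<bar>y\<bar>" using t(1) by simp
  then have "exp t / 2 \<le> exp \<bar>y\<bar>" using exp_gt_zero[of t] by linarith
  then have "exp t / 2 * y\<^sup>2 \<le> exp \<bar>y\<bar> * y\<^sup>2" by (rule mult_right_mono) simp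
  moreover have "\<bar>exp y - 1 - y\<bar> = exp t / 2 * y\<^sup>2" unfolding e by simp
  ultimately have "\<bar>exp y - 1 - y\<bar> \<le> exp \<bar>y\<bar> * y\<^sup>2" by linarith
  then show ?thesis by (simp only: mult.commute)
qed

lemma real_cs_aux:
  fixes a b c :: real
  assumes "\<And>t. 0 \<le> a - 2 * t * c + t\<^sup>2 * b" "b \<ge> 0"
  shows "c\<^sup>2 \<le> a * b"
proof (cases "b > 0")
  case True
  have "0 \<le> a - 2 * (c / b) * c + (c / b)\<^sup>2 * b" using assms(1) .
  also have "\<dots> = a - c\<^sup>2 / b" using True by (simp add: field_simps power2_eq_square)
  finally have "c\<^sup>2 / b \<le> a" by simp
  then show ?thesis using True by (simp add: field_simps)
next
  case False
  then have b0: "b = 0" using assms(2) by simp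
  have "c = 0"
  proof (rule ccontr)
    assume "c \<noteq> 0"
    have "0 \<le> a - 2 * ((a + 1) / (2 * c)) * c + ((a + 1) / (2 * c))\<^sup>2 * b" using assms(1) .
    also have "\<dots> = -1" using b0 \<open>c \<noteq> 0\<close> by (simp add: field_simps)
    finally show False by simp
  qed
  then show ?thesis using b0 by simp
qed

locale sett =
  fixes rho0 :: "real measure" and c :: "nat \<Rightarrow> real" and k n :: nat
  assumes ps: "prob_space rho0" and sets0: "sets rho0 = sets borel"
    and cpt0: "compact (msupp rho0)" and alp0: "at_least_points (n + 1) (msupp rho0)"
begin

lemma opm0: "opm rho0"
  using ps sets0 cpt0 unfolding opm_def prob_space_def by blast

definition Gp :: "real poly" where "Gp = (\<Sum>j=1..k. smult (c j) ([:0,1:]^j))"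

lemma poly_Gp: "poly Gp x = half_fprime c k x"
  unfolding Gp_def half_fprime_def by (simp add: poly_sum)

definition E :: "real \<Rightarrow> real \<Rightarrow> real" where "E s x = exp (poly Gp x * s)"

definition Iq :: "real poly \<Rightarrow> real \<Rightarrow> real" where
  "Iq R s = (\<integral>x. poly R x * E s x \<partial>rho0)"

definition Z :: "real \<Rightarrow> real" where "Z s = Iq 1 s"

definition Gb :: real where
  "Gb = (SOME B. B \<ge> 0 \<and> (\<forall>x\<in>msupp rho0. \<bar>poly Gp x\<bar> \<le> B))"

lemma Gb: "Gb \<ge> 0" "\<And>x. x \<in> msupp rho0 \<Longrightarrow> \<bar>poly Gp x\<bar> \<le> Gb"
proof -
  obtain B where "B \<ge> 0" "\<And>x. x \<in> msupp rho0 \<Longrightarrow> \<bar>poly Gp x\<bar> \<le> B"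
    using opm.bounded_on_supp[OF opm0 continuous_on_poly[OF continuous_on_id]] by blast
  then have ex: "\<exists>B. B \<ge> 0 \<and> (\<forall>x\<in>msupp rho0. \<bar>poly Gp x\<bar> \<le> B)" by blast
  show "Gb \<ge> 0" "\<And>x. x \<in> msupp rho0 \<Longrightarrow> \<bar>poly Gp x\<bar> \<le> Gb"
    using someI_ex[OF ex] unfolding Gb_def by blast+
qed

lemma E_pos: "E s x > 0" unfolding E_def by simp

lemma cont_RE: "continuous_on UNIV (\<lambda>x. poly R x * E s x)"
  unfolding E_def by (intro continuous_intros)

lemma int_RE: "integrable rho0 (\<lambda>x. poly R x * E s x)"
  by (rule opm.integrable_cont[OF opm0 cont_RE])

lemma int_absRE: "integrable rho0 (\<lambda>x. \<bar>poly R x\<bar> * E s x)"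
  by (rule opm.integrable_cont[OF opm0]) (unfold E_def, intro continuous_intros)

lemma int_E: "integrable rho0 (E s)"
  using int_RE[of 1 s] by simp

lemma Iq_add: "Iq (R1 + R2) s = Iq R1 s + Iq R2 s"
  unfolding Iq_def using int_RE[of R1 s] int_RE[of R2 s] by (simp add: distrib_right)

lemma Iq_smult: "Iq (smult a R) s = a * Iq R s"
  unfolding Iq_def by (simp add: mult.assoc)

lemma Iq_diff: "Iq (R1 - R2) s = Iq R1 s - Iq R2 s"
  unfolding Iq_def using int_RE[of R1 s] int_RE[of R2 s] by (simp add: left_diff_distrib)

lemma Iq_zero[simp]: "Iq 0 s = 0" unfolding Iq_def by simp

lemma Iq_sum: "Iq (\<Sum>i\<in>A. f i) s = (\<Sum>i\<in>A. Iq (f i) s)"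
proof (induction A rule: infinite_finite_induct)
  case (insert x F)
  then show ?case by (simp add: Iq_add)
qed simp_all

lemma Iq_sq_nonneg: "Iq (Q * Q) s \<ge> 0"
  unfolding Iq_def using E_pos by (intro integral_nonneg_AE) (simp add: less_imp_le)

lemma Z_pos: "Z s > 0"
proof -
  have nn: "Z s \<ge> 0" using Iq_sq_nonneg[of 1 s] unfolding Z_def by simp
  have "Z s \<noteq> 0"
  proof
    assume "Z s = 0"
    then have "integral\<^sup>L rho0 (E s) = 0" unfolding Z_def Iq_def by simp
    then have "AE x in rho0. E s x = 0"
      using integral_nonneg_eq_0_iff_AE[OF int_E] E_pos by (simp add: less_imp_le)
    then have "AE x in rho0. False" using E_pos by (simp add: less_le)
    then show False using prob_space.AE_False[OF ps] by simp
  qed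
  then show ?thesis using nn by simp
qed

abbreviation "Mt s \<equiv> rho_t rho0 c k s"

lemma Mt_eq: "Mt s = density rho0 (\<lambda>x. ennreal (E s x / Z s))"
  unfolding rho_t_def E_def Z_def Iq_def poly_Gp by simp

lemma dens_meas: "(\<lambda>x. E s x / Z s) \<in> borel_measurable rho0"
  by (rule opm.meas_cont[OF opm0]) (unfold E_def, intro continuous_intros, use Z_pos[of s] in auto)

lemma Mt_int:
  assumes "continuous_on UNIV f"
  shows "integral\<^sup>L (Mt s) f = (\<integral>x. f x * E s x \<partial>rho0) / Z s"
proof -
  have "integral\<^sup>L (Mt s) f = (\<integral>x. (E s x / Z s) *\<^sub>R f x \<partial>rho0)"
    unfolding Mt_eq
    by (rule integral_density[OF opm.meas_cont[OF opm0 assms] dens_meas])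
      (use E_pos Z_pos[of s] in \<open>simp add: less_imp_le\<close>)
  also have "\<dots> = (\<integral>x. f x * E s x / Z s \<partial>rho0)" by (simp add: mult.commute)
  also have "\<dots> = (\<integral>x. f x * E s x \<partial>rho0) / Z s" by simp
  finally show ?thesis .
qed

lemma Mt_sets: "sets (Mt s) = sets borel"
  unfolding Mt_eq using sets0 by simp

lemma Mt_space: "space (Mt s) = UNIV"
  using sets_eq_imp_space_eq[OF Mt_sets] by simp

lemma Mt_prob: "prob_space (Mt s)"
proof (rule prob_spaceI)
  have sp: "space (Mt s) \<in> sets rho0" using Mt_space sets0 by simp
  have "emeasure (Mt s) (space (Mt s)) = (\<integral>\<^sup>+ x. ennreal (E s x / Z s) * indicator (space (Mt s)) x \<partial>rho0)"
    unfolding Mt_eq by (rule emeasure_density) (use dens_meas sp in \<open>simp_all add: Mt_eq\<close>)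
  also have "\<dots> = (\<integral>\<^sup>+ x. ennreal (E s x / Z s) \<partial>rho0)"
    using Mt_space by simp
  also have "\<dots> = ennreal (\<integral>x. E s x / Z s \<partial>rho0)"
    by (rule nn_integral_eq_integral) (use int_E E_pos Z_pos[of s] in \<open>simp_all add: less_imp_le\<close>)
  also have "(\<integral>x. E s x / Z s \<partial>rho0) = 1"
    using Z_pos[of s] unfolding Z_def Iq_def by simp
  finally show "emeasure (Mt s) (space (Mt s)) = 1" by simp
qed

lemma Mt_supp: "msupp (Mt s) = msupp rho0"
proof -
  have "emeasure (Mt s) B > 0 \<longleftrightarrow> emeasure rho0 B > 0" if B: "B \<in> sets borel" for B
  proof -
    have B0: "B \<in> sets rho0" using B sets0 by simp
    have dm: "(\<lambda>x. ennreal (E s x / Z s)) \<in> borel_measurable rho0"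
      using dens_meas by measurable
    have "B \<in> null_sets (Mt s) \<longleftrightarrow> (AE x in rho0. x \<in> B \<longrightarrow> ennreal (E s x / Z s) = 0)"
      unfolding Mt_eq using null_sets_density_iff[OF dm, of B] B0 by simp
    also have "\<dots> \<longleftrightarrow> (AE x in rho0. x \<notin> B)"
    proof (intro AE_cong)
      fix x
      have "E s x / Z s > 0" using E_pos[of s x] Z_pos[of s] by simp
      then have "ennreal (E s x / Z s) \<noteq> 0" by (simp add: ennreal_eq_0_iff not_le)
      then show "(x \<in> B \<longrightarrow> ennreal (E s x / Z s) = 0) \<longleftrightarrow> x \<notin> B" by blast
    qed
    also have "\<dots> \<longleftrightarrow> B \<in> null_sets rho0" using AE_iff_null_sets[OF B0] by simp
    finally have "B \<in> null_sets (Mt s) \<longleftrightarrow> B \<in> null_sets rho0" .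
    moreover have "B \<in> sets (Mt s)" using B Mt_sets by simp
    ultimately show ?thesis using B0 by (simp add: null_sets_def zero_less_iff_neq_zero)
  qed
  then show ?thesis unfolding msupp_def by simp
qed

lemma Mt_opm: "opm (Mt s)"
  unfolding opm_def using Mt_prob[of s] Mt_sets[of s] Mt_supp[of s] cpt0
  by (simp add: prob_space_def)

lemma Mt_ip: "poly_inner (Mt s) p q = Iq (p * q) s / Z s"
proof -
  have "continuous_on UNIV (\<lambda>x. poly p x * poly q x)" by (intro continuous_intros)
  from Mt_int[OF this, of s] show ?thesis unfolding poly_inner_def Iq_def by simp
qed

end

context sett
begin

definition Iabs :: "real poly \<Rightarrow> real \<Rightarrow> real" where
  "Iabs R s = (\<integral>x. \<bar>poly R x\<bar> * E s x \<partial>rho0)"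

lemma AE0: "AE x in rho0. x \<in> msupp rho0"
  by (rule opm.AE_supp[OF opm0])

lemma E_shift: "E b x = E a x * exp (poly Gp x * (b - a))"
  unfolding E_def by (simp add: mult_exp_exp algebra_simps)

lemma g_bound: "x \<in> msupp rho0 \<Longrightarrow> \<bar>poly Gp x * d\<bar> \<le> Gb * \<bar>d\<bar>"
  using Gb(2)[of x] by (simp add: abs_mult mult_right_mono)

lemma E_ratio: "x \<in> msupp rho0 \<Longrightarrow> E b x \<le> exp (Gb * \<bar>b - a\<bar>) * E a x"
proof -
  assume x: "x \<in> msupp rho0"
  have "poly Gp x * (b - a) \<le> Gb * \<bar>b - a\<bar>" using g_bound[OF x, of "b - a"] by linarith
  then have "exp (poly Gp x * (b - a)) \<le> exp (Gb * \<bar>b - a\<bar>)" by simp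
  then have "E a x * exp (poly Gp x * (b - a)) \<le> E a x * exp (Gb * \<bar>b - a\<bar>)"
    using E_pos[of a x] by (intro mult_left_mono) simp_all
  then show ?thesis using E_shift[of b x a] by (simp add: mult.commute)
qed

lemma Iq_ratio:
  assumes nn: "\<And>x. poly R x \<ge> 0"
  shows "Iq R b \<le> exp (Gb * \<bar>b - a\<bar>) * Iq R a"
proof -
  have "Iq R b \<le> (\<integral>x. exp (Gb * \<bar>b - a\<bar>) * (poly R x * E a x) \<partial>rho0)"
    unfolding Iq_def
  proof (rule integral_mono_AE[OF int_RE])
    show "integrable rho0 (\<lambda>x. exp (Gb * \<bar>b - a\<bar>) * (poly R x * E a x))"
      by (intro integrable_mult_right int_RE)
    show "AE x in rho0. poly R x * E b x \<le> exp (Gb * \<bar>b - a\<bar>) * (poly R x * E a x)"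
      using AE0
    proof eventually_elim
      case (elim x)
      have "poly R x * E b x \<le> poly R x * (exp (Gb * \<bar>b - a\<bar>) * E a x)"
        using E_ratio[OF elim, of b a] nn[of x] by (intro mult_left_mono) simp_all
      then show ?case by (simp add: ac_simps)
    qed
  qed
  also have "\<dots> = exp (Gb * \<bar>b - a\<bar>) * Iq R a" unfolding Iq_def by simp
  finally show ?thesis .
qed

lemma sq_nonneg_poly: "poly (Q * Q) x \<ge> (0::real)" by simp

lemma Iabs_sq: "Iabs (Q * Q) s = Iq (Q * Q) s"
  unfolding Iabs_def Iq_def by (simp add: abs_mult)

lemma Iq_taylor:
  "\<bar>Iq R b - Iq R a - (b - a) * Iq (Gp * R) a\<bar>
     \<le> (b - a)\<^sup>2 * Gb\<^sup>2 * exp (Gb * \<bar>b - a\<bar>) * Iabs R a"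
proof -
  define K where "K = (b - a)\<^sup>2 * Gb\<^sup>2 * exp (Gb * \<bar>b - a\<bar>)"
  define f where "f x = poly R x * E b x - poly R x * E a x - (b - a) * (poly (Gp * R) x * E a x)" for x
  have cf: "continuous_on UNIV f" unfolding f_def E_def by (intro continuous_intros)
  have intf: "integrable rho0 f" by (rule opm.integrable_cont[OF opm0 cf])
  have "Iq R b - Iq R a - (b - a) * Iq (Gp * R) a = integral\<^sup>L rho0 f"
    unfolding Iq_def f_def using int_RE[of R b] int_RE[of R a] int_RE[of "Gp * R" a] by simp
  then have "\<bar>Iq R b - Iq R a - (b - a) * Iq (Gp * R) a\<bar> = \<bar>integral\<^sup>L rho0 f\<bar>" by simp
  also have "\<dots> \<le> (\<integral>x. \<bar>f x\<bar> \<partial>rho0)" using integral_norm_bound[of rho0 f] by simp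
  also have "\<dots> \<le> (\<integral>x. K * (\<bar>poly R x\<bar> * E a x) \<partial>rho0)"
  proof (rule integral_mono_AE)
    show "integrable rho0 (\<lambda>x. \<bar>f x\<bar>)" using intf by (rule integrable_abs)
    show "integrable rho0 (\<lambda>x. K * (\<bar>poly R x\<bar> * E a x))" by (intro integrable_mult_right int_absRE)
    show "AE x in rho0. \<bar>f x\<bar> \<le> K * (\<bar>poly R x\<bar> * E a x)"
      using AE0
    proof eventually_elim
      case (elim x)
      define y where "y = poly Gp x * (b - a)"
      have fx: "f x = poly R x * (E a x * (exp y - 1 - y))"
        unfolding f_def y_def using E_shift[of b x a] by (simp add: algebra_simps)
      have ay: "\<bar>y\<bar> \<le> Gb * \<bar>b - a\<bar>" unfolding y_def by (rule g_bound[OF elim])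
      have "y\<^sup>2 = \<bar>y\<bar>\<^sup>2" by simp
      also have "\<dots> \<le> (Gb * \<bar>b - a\<bar>)\<^sup>2" using ay by (intro power_mono) simp_all
      also have "\<dots> = (b - a)\<^sup>2 * Gb\<^sup>2" by (simp add: power_mult_distrib)
      finally have y2: "y\<^sup>2 \<le> (b - a)\<^sup>2 * Gb\<^sup>2" .
      have ey: "exp \<bar>y\<bar> \<le> exp (Gb * \<bar>b - a\<bar>)" using ay by simp
      have "\<bar>exp y - 1 - y\<bar> \<le> y\<^sup>2 * exp \<bar>y\<bar>" by (rule exp_taylor2)
      also have "\<dots> \<le> K" unfolding K_def using y2 ey by (intro mult_mono) simp_all
      finally have t: "\<bar>exp y - 1 - y\<bar> \<le> K" .
      have "\<bar>f x\<bar> = (\<bar>poly R x\<bar> * E a x) * \<bar>exp y - 1 - y\<bar>"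
        unfolding fx using E_pos[of a x] by (simp add: abs_mult)
      also have "\<dots> \<le> (\<bar>poly R x\<bar> * E a x) * K"
        using t E_pos[of a x] by (intro mult_left_mono) simp_all
      finally show ?case by (simp add: ac_simps)
    qed
  qed
  also have "\<dots> = K * Iabs R a" unfolding Iabs_def by simp
  finally show ?thesis unfolding K_def .
qed

lemma Iq_CS: "(Iq (A * B) s)\<^sup>2 \<le> Iq (A * A) s * Iq (B * B) s"
proof (rule real_cs_aux)
  fix t
  have pe: "(A - smult t B) * (A - smult t B) = A * A - smult (2 * t) (A * B) + smult (t\<^sup>2) (B * B)"
  proof -
    have "poly ((A - smult t B) * (A - smult t B)) = poly (A * A - smult (2 * t) (A * B) + smult (t\<^sup>2) (B * B))"
      by (rule ext) (simp add: algebra_simps power2_eq_square)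
    then show ?thesis by (simp add: poly_eq_poly_eq_iff)
  qed
  have "0 \<le> Iq ((A - smult t B) * (A - smult t B)) s" by (rule Iq_sq_nonneg)
  also have "\<dots> = Iq (A * A) s - 2 * t * Iq (A * B) s + t\<^sup>2 * Iq (B * B) s"
    unfolding pe by (simp add: Iq_add Iq_diff Iq_smult)
  finally show "0 \<le> Iq (A * A) s - 2 * t * Iq (A * B) s + t\<^sup>2 * Iq (B * B) s" .
next
  show "0 \<le> Iq (B * B) s" by (rule Iq_sq_nonneg)
qed

lemma Iq_deriv: "((\<lambda>s. Iq R s) has_real_derivative Iq (Gp * R) a) (at a)"
proof -
  define K where "K s = \<bar>s - a\<bar> * (Gb\<^sup>2 * exp (Gb * \<bar>s - a\<bar>) * Iabs R a)" for s
  have lim: "(K \<longlongrightarrow> 0) (at a)"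
  proof -
    have "(K \<longlongrightarrow> \<bar>a - a\<bar> * (Gb\<^sup>2 * exp (Gb * \<bar>a - a\<bar>) * Iabs R a)) (at a)"
      unfolding K_def by (intro tendsto_intros)
    then show ?thesis by simp
  qed
  have ev: "eventually (\<lambda>s. norm ((Iq R s - Iq R a) / (s - a) - Iq (Gp * R) a) \<le> K s) (at a)"
    unfolding eventually_at_filter
  proof (rule always_eventually, intro allI impI)
    fix s assume "s \<noteq> a"
    then have sa: "\<bar>s - a\<bar> > 0" by simp
    have "(Iq R s - Iq R a) / (s - a) - Iq (Gp * R) a
        = (Iq R s - Iq R a - (s - a) * Iq (Gp * R) a) / (s - a)"
      using \<open>s \<noteq> a\<close> by (simp add: field_simps)
    then have "norm ((Iq R s - Iq R a) / (s - a) - Iq (Gp * R) a)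
        = \<bar>Iq R s - Iq R a - (s - a) * Iq (Gp * R) a\<bar> / \<bar>s - a\<bar>" by simp
    also have "\<dots> \<le> ((s - a)\<^sup>2 * Gb\<^sup>2 * exp (Gb * \<bar>s - a\<bar>) * Iabs R a) / \<bar>s - a\<bar>"
      using Iq_taylor[of R s a] sa by (intro divide_right_mono) simp_all
    also have "\<dots> = K s"
    proof -
      define Y where "Y = Gb\<^sup>2 * exp (Gb * \<bar>s - a\<bar>) * Iabs R a"
      have "(s - a)\<^sup>2 * Gb\<^sup>2 * exp (Gb * \<bar>s - a\<bar>) * Iabs R a = \<bar>s - a\<bar> * (\<bar>s - a\<bar> * Y)"
        unfolding Y_def by (simp only: abs_mult_self_eq power2_eq_square mult.assoc)
      then show ?thesis unfolding K_def Y_def[symmetric] using sa by simp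
    qed
    finally show "norm ((Iq R s - Iq R a) / (s - a) - Iq (Gp * R) a) \<le> K s" .
  qed
  show ?thesis unfolding has_field_derivative_iff
    by (rule LIM_zero_cancel, rule Lim_null_comparison[OF ev lim])
qed

abbreviation "Pm s \<equiv> monic_orth_poly (Mt s) n"

lemma alpMt: "at_least_points (n + 1) (msupp (Mt s))"
  using alp0 Mt_supp by simp

lemma Pm_deg: "degree (Pm s) = n" and Pm_lead: "lead_coeff (Pm s) = 1"
  using opm.mop(1,2)[OF Mt_opm alpMt] by blast+

lemma Pm_orth: "degree q < n \<Longrightarrow> Iq (Pm s * q) s = 0"
  using opm.mop(3)[OF Mt_opm alpMt, of q s] Mt_ip[of s "Pm s" q] Z_pos[of s] by simp

lemma Pm_pos: "Iq (Pm s * Pm s) s > 0"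
  using opm.mop_ip_pos[OF Mt_opm alpMt, of s] Mt_ip[of s "Pm s" "Pm s"] Z_pos[of s]
  by (simp add: zero_less_divide_iff)

lemma pyth:
  assumes "degree Q = n" "lead_coeff Q = 1"
  shows "Iq (Q * Q) s = Iq (Pm s * Pm s) s + Iq ((Q - Pm s) * (Q - Pm s)) s"
proof -
  define D where "D = Q - Pm s"
  have o: "Iq (Pm s * D) s = 0"
  proof (cases "D = 0")
    case False
    have c: "coeff D n = 0" using assms Pm_deg[of s] Pm_lead[of s] unfolding D_def by simp
    have "degree D \<le> n" using degree_diff_le[of Q n "Pm s"] assms Pm_deg[of s] unfolding D_def by simp
    moreover have "degree D \<noteq> n" using c False leading_coeff_0_iff by metis
    ultimately show ?thesis using Pm_orth by simp
  qed simp
  have "Q * Q = Pm s * Pm s + (Pm s * D + Pm s * D) + D * D" unfolding D_def by algebra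
  then have "Iq (Q * Q) s = Iq (Pm s * Pm s) s + (Iq (Pm s * D) s + Iq (Pm s * D) s) + Iq (D * D) s"
    by (simp only: Iq_add)
  then show ?thesis using o unfolding D_def by simp
qed

end

context sett
begin

lemma Iq_g_sq: "\<bar>Iq (Gp * (Q * Q)) s\<bar> \<le> Gb * Iq (Q * Q) s"
proof -
  have "\<bar>Iq (Gp * (Q * Q)) s\<bar> \<le> (\<integral>x. \<bar>poly (Gp * (Q * Q)) x * E s x\<bar> \<partial>rho0)"
    unfolding Iq_def using integral_norm_bound[of rho0 "\<lambda>x. poly (Gp * (Q * Q)) x * E s x"] by simp
  also have "\<dots> \<le> (\<integral>x. Gb * (poly (Q * Q) x * E s x) \<partial>rho0)"
  proof (rule integral_mono_AE)
    show "integrable rho0 (\<lambda>x. \<bar>poly (Gp * (Q * Q)) x * E s x\<bar>)"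
      by (intro integrable_abs int_RE)
    show "integrable rho0 (\<lambda>x. Gb * (poly (Q * Q) x * E s x))"
      by (intro integrable_mult_right int_RE)
    show "AE x in rho0. \<bar>poly (Gp * (Q * Q)) x * E s x\<bar> \<le> Gb * (poly (Q * Q) x * E s x)"
      using AE0
    proof eventually_elim
      case (elim x)
      have "\<bar>poly (Gp * (Q * Q)) x * E s x\<bar> = \<bar>poly Gp x\<bar> * (poly (Q * Q) x * E s x)"
        using E_pos[of s x] by (simp add: abs_mult)
      also have "\<dots> \<le> Gb * (poly (Q * Q) x * E s x)"
        using Gb(2)[OF elim] E_pos[of s x] by (intro mult_right_mono) simp_all
      finally show ?case .
    qed
  qed
  also have "\<dots> = Gb * Iq (Q * Q) s" unfolding Iq_def by simp
  finally show ?thesis .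
qed

lemma Iq_gQ_sq: "Iq ((Gp * Q) * (Gp * Q)) s \<le> Gb\<^sup>2 * Iq (Q * Q) s"
proof -
  have "Iq ((Gp * Q) * (Gp * Q)) s \<le> (\<integral>x. Gb\<^sup>2 * (poly (Q * Q) x * E s x) \<partial>rho0)"
    unfolding Iq_def
  proof (rule integral_mono_AE)
    show "integrable rho0 (\<lambda>x. poly (Gp * Q * (Gp * Q)) x * E s x)" by (rule int_RE)
    show "integrable rho0 (\<lambda>x. Gb\<^sup>2 * (poly (Q * Q) x * E s x))"
      by (intro integrable_mult_right int_RE)
    show "AE x in rho0. poly (Gp * Q * (Gp * Q)) x * E s x \<le> Gb\<^sup>2 * (poly (Q * Q) x * E s x)"
      using AE0
    proof eventually_elim
      case (elim x)
      have "(poly Gp x)\<^sup>2 = \<bar>poly Gp x\<bar>\<^sup>2" by simp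
      also have "\<dots> \<le> Gb\<^sup>2" using Gb(2)[OF elim] by (intro power_mono) simp_all
      finally have g2: "(poly Gp x)\<^sup>2 \<le> Gb\<^sup>2" .
      have "poly (Gp * Q * (Gp * Q)) x * E s x = (poly Gp x)\<^sup>2 * (poly (Q * Q) x * E s x)"
        by (simp add: power2_eq_square ac_simps)
      also have "\<dots> \<le> Gb\<^sup>2 * (poly (Q * Q) x * E s x)"
        using g2 E_pos[of s x] by (intro mult_right_mono) simp_all
      finally show ?case .
    qed
  qed
  also have "\<dots> = Gb\<^sup>2 * Iq (Q * Q) s" unfolding Iq_def by simp
  finally show ?thesis .
qed

lemma N_deriv:
  "((\<lambda>s. Iq (Pm s * Pm s) s) has_real_derivative Iq (Gp * (Pm u * Pm u)) u) (at u)"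
proof -
  define Pu where "Pu = Pm u"
  define N where "N s = Iq (Pm s * Pm s) s" for s
  define L0 where "L0 = Iq (Gp * (Pu * Pu)) u"
  define Ls where "Ls s = Iq (Gp * (Pm s * Pm s)) s" for s
  define e where "e s = exp (Gb * \<bar>s - u\<bar>)" for s
  define w where "w s = e s * N u - N u / e s" for s
  have Nu: "N u = Iq (Pu * Pu) u" unfolding N_def Pu_def by simp
  have Nu0: "N u \<ge> 0" unfolding N_def by (rule Iq_sq_nonneg)
  have Ns0: "N s \<ge> 0" for s unfolding N_def by (rule Iq_sq_nonneg)
  have epos: "e s > 0" for s unfolding e_def by simp
  have e1: "e s \<ge> 1" for s unfolding e_def using Gb(1) by simp
  have PuQ: "degree Pu = n" "lead_coeff Pu = 1" unfolding Pu_def using Pm_deg Pm_lead by auto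
  have f1: "N s \<le> Iq (Pu * Pu) s" for s
    using pyth[OF PuQ, of s] Iq_sq_nonneg[of "Pu - Pm s" s] unfolding N_def by simp
  have f2: "Iq (Pu * Pu) s \<le> e s * N u" for s
    using Iq_ratio[of "Pu * Pu" s u] unfolding Nu e_def by simp
  have f3: "N u \<le> Iq (Pm s * Pm s) u" for s
    using pyth[OF Pm_deg Pm_lead, of s u] Iq_sq_nonneg[of "Pm s - Pm u" u] unfolding N_def by simp
  have f4: "Iq (Pm s * Pm s) u \<le> e s * N s" for s
    using Iq_ratio[of "Pm s * Pm s" u s] unfolding N_def e_def by (simp add: abs_minus_commute)
  have Nslow: "N u / e s \<le> N s" for s
    using f3[of s] f4[of s] epos[of s] by (simp add: divide_le_eq mult.commute)
  have Nsup: "N s \<le> e s * N u" for s using f1[of s] f2[of s] by linarith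
  have FD: "Iq ((Pm s - Pu) * (Pm s - Pu)) s \<le> w s" for s
  proof -
    have "(Pu - Pm s) * (Pu - Pm s) = (Pm s - Pu) * (Pm s - Pu)" by algebra
    then have "Iq (Pu * Pu) s = N s + Iq ((Pm s - Pu) * (Pm s - Pu)) s"
      using pyth[OF PuQ, of s] unfolding N_def by simp
    then show ?thesis using f2[of s] Nslow[of s] unfolding w_def by linarith
  qed
  have FD0: "Iq ((Pm s - Pu) * (Pm s - Pu)) s \<ge> 0" for s by (rule Iq_sq_nonneg)
  define h1 where "h1 s = \<bar>Iq (Gp * (Pu * Pu)) s - L0\<bar> + 2 * sqrt (Gb\<^sup>2 * (e s * N u) * w s) + Gb * w s" for s
  have Lbound: "\<bar>Ls s - L0\<bar> \<le> h1 s" for s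
  proof -
    define D where "D = Pm s - Pu"
    have PsD: "Pm s = Pu + D" unfolding D_def by simp
    have "Gp * (Pm s * Pm s) = Gp * (Pu * Pu) + ((Gp * Pu) * D + (Gp * Pu) * D) + Gp * (D * D)"
      unfolding PsD by algebra
    then have Ls_eq: "Ls s = Iq (Gp * (Pu * Pu)) s + (Iq ((Gp * Pu) * D) s + Iq ((Gp * Pu) * D) s)
        + Iq (Gp * (D * D)) s"
      unfolding Ls_def by (simp only: Iq_add)
    have t3: "\<bar>Iq (Gp * (D * D)) s\<bar> \<le> Gb * w s"
      using Iq_g_sq[of D s] FD[of s] Gb(1) unfolding D_def
      by (meson mult_left_mono order_trans)
    have cs: "(Iq ((Gp * Pu) * D) s)\<^sup>2 \<le> Gb\<^sup>2 * (e s * N u) * w s"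
    proof -
      have "(Iq ((Gp * Pu) * D) s)\<^sup>2 \<le> Iq ((Gp * Pu) * (Gp * Pu)) s * Iq (D * D) s"
        by (rule Iq_CS)
      also have "\<dots> \<le> (Gb\<^sup>2 * (e s * N u)) * w s"
      proof (rule mult_mono)
        show "Iq (Gp * Pu * (Gp * Pu)) s \<le> Gb\<^sup>2 * (e s * N u)"
          using Iq_gQ_sq[of Pu s] f2[of s] by (meson mult_left_mono order_trans zero_le_power2)
        show "Iq (D * D) s \<le> w s" using FD[of s] unfolding D_def .
        show "0 \<le> Gb\<^sup>2 * (e s * N u)" using epos[of s] Nu0 by simp
        show "0 \<le> Iq (D * D) s" by (rule Iq_sq_nonneg)
      qed
      finally show ?thesis .
    qed
    have t2: "\<bar>Iq ((Gp * Pu) * D) s\<bar> \<le> sqrt (Gb\<^sup>2 * (e s * N u) * w s)"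
      using real_sqrt_le_mono[OF cs] by simp
    show ?thesis unfolding h1_def using Ls_eq t2 t3 by linarith
  qed
  have h1lim: "(h1 \<longlongrightarrow> 0) (at u)"
  proof -
    have "isCont (\<lambda>s. Iq (Gp * (Pu * Pu)) s) u"
      by (rule DERIV_isCont[OF Iq_deriv])
    then have c1: "((\<lambda>s. Iq (Gp * (Pu * Pu)) s) \<longlongrightarrow> L0) (at u)"
      unfolding isCont_def L0_def .
    have ce: "(e \<longlongrightarrow> 1) (at u)"
    proof -
      have "(e \<longlongrightarrow> exp (Gb * \<bar>u - u\<bar>)) (at u)" unfolding e_def by (intro tendsto_intros)
      then show ?thesis by simp
    qed
    have cw: "(w \<longlongrightarrow> 0) (at u)"
    proof -
      have "(w \<longlongrightarrow> 1 * N u - N u / 1) (at u)" unfolding w_def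
        by (intro tendsto_intros ce) simp
      then show ?thesis by simp
    qed
    have "(h1 \<longlongrightarrow> \<bar>L0 - L0\<bar> + 2 * sqrt (Gb\<^sup>2 * (1 * N u) * 0) + Gb * 0) (at u)"
      unfolding h1_def by (intro tendsto_intros c1 ce cw)
    then show ?thesis by simp
  qed
  define h2 where "h2 s = h1 s + \<bar>s - u\<bar> * (Gb\<^sup>2 * e s * (e s + 1) * N u)" for s
  have h2lim: "(h2 \<longlongrightarrow> 0) (at u)"
  proof -
    have ce: "(e \<longlongrightarrow> exp (Gb * \<bar>u - u\<bar>)) (at u)" unfolding e_def by (intro tendsto_intros)
    have "(h2 \<longlongrightarrow> 0 + \<bar>u - u\<bar> * (Gb\<^sup>2 * exp (Gb * \<bar>u - u\<bar>) * (exp (Gb * \<bar>u - u\<bar>) + 1) * N u)) (at u)"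
      unfolding h2_def by (intro tendsto_intros h1lim ce)
    then show ?thesis by simp
  qed
  have ev: "eventually (\<lambda>s. norm ((N s - N u) / (s - u) - L0) \<le> h2 s) (at u)"
    unfolding eventually_at_filter
  proof (rule always_eventually, intro allI impI)
    fix s assume "s \<noteq> u"
    then have sa: "\<bar>s - u\<bar> > 0" by simp
    define C where "C = (s - u)\<^sup>2 * Gb\<^sup>2 * e s"
    have C0: "C \<ge> 0" unfolding C_def using epos[of s] by simp
    have up: "N s - N u - (s - u) * L0 \<le> C * N u"
    proof -
      have "\<bar>Iq (Pu * Pu) s - Iq (Pu * Pu) u - (s - u) * Iq (Gp * (Pu * Pu)) u\<bar>
          \<le> (s - u)\<^sup>2 * Gb\<^sup>2 * exp (Gb * \<bar>s - u\<bar>) * Iabs (Pu * Pu) u" by (rule Iq_taylor)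
      then show ?thesis using f1[of s] unfolding C_def e_def L0_def Iabs_sq Nu by linarith
    qed
    have lo: "N s - N u - (s - u) * L0 \<ge> (s - u) * (Ls s - L0) - C * N s"
    proof -
      have q1: "(u - s)\<^sup>2 = (s - u)\<^sup>2" by (simp add: power2_commute)
      have q2: "\<bar>u - s\<bar> = \<bar>s - u\<bar>" by (simp add: abs_minus_commute)
      have "\<bar>Iq (Pm s * Pm s) u - Iq (Pm s * Pm s) s - (u - s) * Iq (Gp * (Pm s * Pm s)) s\<bar>
          \<le> (s - u)\<^sup>2 * Gb\<^sup>2 * exp (Gb * \<bar>s - u\<bar>) * Iabs (Pm s * Pm s) s"
        using Iq_taylor[of "Pm s * Pm s" u s] unfolding q1 q2 .
      then have "Iq (Pm s * Pm s) u \<le> N s + (u - s) * Ls s + C * N s"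
        unfolding C_def e_def Ls_def N_def Iabs_sq by linarith
      then show ?thesis using f3[of s] by (simp add: algebra_simps)
    qed
    have a1: "-(\<bar>s - u\<bar> * \<bar>Ls s - L0\<bar>) \<le> (s - u) * (Ls s - L0)"
      using abs_ge_minus_self[of "(s - u) * (Ls s - L0)"] by (simp add: abs_mult)
    have a2: "C * N s \<le> C * (e s * N u)" using Nsup[of s] C0 by (rule mult_left_mono)
    have a3: "C * N u \<le> C * (e s * N u) + C * N u" using C0 epos[of s] Nu0 by simp
    have absD: "\<bar>N s - N u - (s - u) * L0\<bar> \<le> \<bar>s - u\<bar> * \<bar>Ls s - L0\<bar> + (C * (e s * N u) + C * N u)"
      using up lo a1 a2 a3 C0 Nu0 epos[of s] by (simp add: abs_le_iff) (smt (verit) mult_nonneg_nonneg)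
    have "(N s - N u) / (s - u) - L0 = (N s - N u - (s - u) * L0) / (s - u)"
      using \<open>s \<noteq> u\<close> by (simp add: field_simps)
    then have "norm ((N s - N u) / (s - u) - L0) = \<bar>N s - N u - (s - u) * L0\<bar> / \<bar>s - u\<bar>" by simp
    also have "\<dots> \<le> (\<bar>s - u\<bar> * \<bar>Ls s - L0\<bar> + (C * (e s * N u) + C * N u)) / \<bar>s - u\<bar>"
      using absD sa by (intro divide_right_mono) simp_all
    also have "\<dots> = \<bar>Ls s - L0\<bar> + \<bar>s - u\<bar> * (Gb\<^sup>2 * e s * (e s + 1) * N u)"
    proof -
      have "C * (e s * N u) + C * N u = \<bar>s - u\<bar> * (\<bar>s - u\<bar> * (Gb\<^sup>2 * e s * (e s + 1) * N u))"
      proof -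
        define a where "a = \<bar>s - u\<bar>"
        have sq: "(s - u)\<^sup>2 = a * a" unfolding a_def by (simp add: abs_mult_self_eq power2_eq_square)
        show ?thesis unfolding C_def sq a_def[symmetric] by (simp add: algebra_simps)
      qed
      then show ?thesis using sa by (simp add: add_divide_distrib)
    qed
    also have "\<dots> \<le> h2 s" unfolding h2_def using Lbound[of s] by simp
    finally show "norm ((N s - N u) / (s - u) - L0) \<le> h2 s" .
  qed
  have "(N has_real_derivative L0) (at u)"
    unfolding has_field_derivative_iff
    by (rule LIM_zero_cancel, rule Lim_null_comparison[OF ev h2lim])
  then show ?thesis unfolding N_def L0_def Pu_def .
qed

end

context sett
begin

lemma ln_norm_eq:
  "ln (poly_L2norm (Mt s) (Pm s)) = (ln (Iq (Pm s * Pm s) s) - ln (Z s)) / 2"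
proof -
  have p: "Iq (Pm s * Pm s) s > 0" by (rule Pm_pos)
  have z: "Z s > 0" by (rule Z_pos)
  have "poly_L2norm (Mt s) (Pm s) = sqrt (Iq (Pm s * Pm s) s / Z s)"
    unfolding poly_L2norm_def Mt_ip ..
  then have "ln (poly_L2norm (Mt s) (Pm s)) = ln (Iq (Pm s * Pm s) s / Z s) / 2"
    using p z by (simp add: ln_sqrt)
  also have "\<dots> = (ln (Iq (Pm s * Pm s) s) - ln (Z s)) / 2"
    using p z by (simp add: ln_divide_pos)
  finally show ?thesis .
qed

lemma mop0_Mt: "monic_orth_poly (Mt s) 0 = 1"
proof -
  have a1: "at_least_points (0 + 1) (msupp (Mt s))"
    using at_least_points_mono[OF alpMt, of 1] by simp
  have d: "degree (monic_orth_poly (Mt s) 0) = 0" and l: "lead_coeff (monic_orth_poly (Mt s) 0) = 1"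
    using opm.mop(1,2)[OF Mt_opm a1] by blast+
  obtain a where a: "monic_orth_poly (Mt s) 0 = pCons a 0" using degree_eq_zeroE[OF d] by blast
  then have "a = 1" using l d by simp
  then show ?thesis using a by (simp add: one_pCons)
qed

lemma onp0_Mt: "orthonormal_poly (Mt s) 0 = 1"
proof -
  have "poly_inner (Mt s) 1 1 = 1" unfolding Mt_ip using Z_pos[of s] by (simp add: Z_def)
  then show ?thesis unfolding orthonormal_poly_def mop0_Mt poly_L2norm_def by simp
qed

lemma J_nn:
  assumes "1 \<le> j"
  shows "mat_pow_inf (jacobi_matrix (Mt u)) j (n + 1) (n + 1)
    = Iq (Pm u * ([:0,1:]^j * Pm u)) u / Iq (Pm u * Pm u) u"
proof -
  define a where "a = 1 / poly_L2norm (Mt u) (Pm u)"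
  have "mat_pow_inf (jacobi_matrix (Mt u)) j (n + 1) (n + 1)
      = poly_inner (Mt u) (orthonormal_poly (Mt u) n) ([:0,1:]^j * orthonormal_poly (Mt u) n)"
    using opm.J_pow[OF Mt_opm assms] alpMt[of u] by simp
  also have "\<dots> = poly_inner (Mt u) (smult a (Pm u)) ([:0,1:]^j * smult a (Pm u))"
    unfolding orthonormal_poly_def a_def ..
  also have "\<dots> = a\<^sup>2 * Iq (Pm u * ([:0,1:]^j * Pm u)) u / Z u"
  proof -
    have "smult a (Pm u) * ([:0,1:]^j * smult a (Pm u)) = smult (a\<^sup>2) (Pm u * ([:0,1:]^j * Pm u))"
      by (simp add: power2_eq_square mult_smult_left mult_smult_right)
    then show ?thesis unfolding Mt_ip by (simp add: Iq_smult)
  qed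
  also have "a\<^sup>2 = Z u / Iq (Pm u * Pm u) u"
  proof -
    have "(poly_L2norm (Mt u) (Pm u))\<^sup>2 = poly_inner (Mt u) (Pm u) (Pm u)"
      by (rule opm.mop_norm_sq[OF Mt_opm])
    then have "(poly_L2norm (Mt u) (Pm u))\<^sup>2 = Iq (Pm u * Pm u) u / Z u" unfolding Mt_ip .
    then show ?thesis unfolding a_def by (simp add: power_divide)
  qed
  finally show ?thesis using Z_pos[of u] by simp
qed

lemma J_11:
  assumes "1 \<le> j"
  shows "mat_pow_inf (jacobi_matrix (Mt u)) j 1 1 = Iq ([:0,1:]^j) u / Z u"
proof -
  have a1: "at_least_points 1 (msupp (Mt u))"
    using at_least_points_mono[OF alpMt, of 1] by simp
  have "mat_pow_inf (jacobi_matrix (Mt u)) j 1 1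
      = poly_inner (Mt u) (orthonormal_poly (Mt u) 0) ([:0,1:]^j * orthonormal_poly (Mt u) 0)"
    using opm.J_pow[OF Mt_opm assms] a1 by simp
  then show ?thesis unfolding onp0_Mt Mt_ip by simp
qed

lemma final:
  "((\<lambda>s. ln (poly_L2norm (Mt s) (Pm s))) has_real_derivative
     (1/2) * (\<Sum>j=1..k. c j *
        (mat_pow_inf (jacobi_matrix (Mt u)) j (n + 1) (n + 1)
         - mat_pow_inf (jacobi_matrix (Mt u)) j 1 1))) (at u)"
proof -
  define N where "N s = Iq (Pm s * Pm s) s" for s
  define X :: "real poly" where "X = [:0,1:]"
  have Npos: "N u > 0" unfolding N_def by (rule Pm_pos)
  have Zpos: "Z u > 0" by (rule Z_pos)
  have dN: "(N has_real_derivative Iq (Gp * (Pm u * Pm u)) u) (at u)"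
    unfolding N_def by (rule N_deriv)
  have dZ: "(Z has_real_derivative Iq (Gp * 1) u) (at u)"
    unfolding Z_def[abs_def] by (rule Iq_deriv)
  have d1: "((\<lambda>s. ln (N s)) has_real_derivative inverse (N u) * Iq (Gp * (Pm u * Pm u)) u) (at u)"
    by (rule DERIV_chain2[OF DERIV_ln[OF Npos] dN])
  have d2: "((\<lambda>s. ln (Z s)) has_real_derivative inverse (Z u) * Iq (Gp * 1) u) (at u)"
    by (rule DERIV_chain2[OF DERIV_ln[OF Zpos] dZ])
  have d3: "((\<lambda>s. (ln (N s) - ln (Z s)) / 2) has_real_derivative
      (inverse (N u) * Iq (Gp * (Pm u * Pm u)) u - inverse (Z u) * Iq (Gp * 1) u) / 2) (at u)"
    by (intro DERIV_cdivide DERIV_diff d1 d2)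
  have feq: "(\<lambda>s. ln (poly_L2norm (Mt s) (Pm s))) = (\<lambda>s. (ln (N s) - ln (Z s)) / 2)"
    unfolding N_def by (rule ext) (rule ln_norm_eq)
  have s1: "(\<Sum>j=1..k. c j * Iq (Pm u * (X^j * Pm u)) u) = Iq (Gp * (Pm u * Pm u)) u"
  proof -
    have "Gp * (Pm u * Pm u) = (\<Sum>j=1..k. smult (c j) (X^j * (Pm u * Pm u)))"
      unfolding Gp_def X_def by (simp only: sum_distrib_right mult_smult_left)
    also have "\<dots> = (\<Sum>j=1..k. smult (c j) (Pm u * (X^j * Pm u)))"
      by (rule sum.cong[OF refl]) (simp add: ac_simps)
    finally have "Gp * (Pm u * Pm u) = (\<Sum>j=1..k. smult (c j) (Pm u * (X^j * Pm u)))" .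
    then show ?thesis by (simp add: Iq_sum Iq_smult)
  qed
  have s2: "(\<Sum>j=1..k. c j * Iq (X^j) u) = Iq (Gp * 1) u"
    unfolding Gp_def X_def by (simp add: Iq_sum Iq_smult)
  have "(1/2) * (\<Sum>j=1..k. c j *
        (mat_pow_inf (jacobi_matrix (Mt u)) j (n + 1) (n + 1)
         - mat_pow_inf (jacobi_matrix (Mt u)) j 1 1))
      = (1/2) * (\<Sum>j=1..k. c j * Iq (Pm u * (X^j * Pm u)) u / N u - c j * Iq (X^j) u / Z u)"
    unfolding N_def X_def
  proof (intro arg_cong[where f = "\<lambda>x. (1/2) * x"] sum.cong refl)
    fix j assume "j \<in> {1..k}"
    then have j: "1 \<le> j" by simp
    show "c j * (mat_pow_inf (jacobi_matrix (Mt u)) j (n + 1) (n + 1)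
         - mat_pow_inf (jacobi_matrix (Mt u)) j 1 1) =
      c j * Iq (Pm u * ([:0,1:]^j * Pm u)) u / Iq (Pm u * Pm u) u - c j * Iq ([:0,1:]^j) u / Z u"
      unfolding J_nn[OF j] J_11[OF j] by (simp add: right_diff_distrib)
  qed
  also have "\<dots> = (1/2) * ((\<Sum>j=1..k. c j * Iq (Pm u * (X^j * Pm u)) u) / N u
      - (\<Sum>j=1..k. c j * Iq (X^j) u) / Z u)"
    by (simp add: sum_subtractf sum_divide_distrib)
  also have "\<dots> = (inverse (N u) * Iq (Gp * (Pm u * Pm u)) u - inverse (Z u) * Iq (Gp * 1) u) / 2"
    unfolding s1 s2 N_def by (simp add: field_simps)
  finally have veq: "(1/2) * (\<Sum>j=1..k. c j *
        (mat_pow_inf (jacobi_matrix (Mt u)) j (n + 1) (n + 1)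
         - mat_pow_inf (jacobi_matrix (Mt u)) j 1 1))
      = (inverse (N u) * Iq (Gp * (Pm u * Pm u)) u - inverse (Z u) * Iq (Gp * 1) u) / 2" .
  show ?thesis unfolding feq veq by (rule d3)
qed

end

theorem proposition9p4:
  fixes rho0 :: "real measure" and c :: "nat \<Rightarrow> real" and k n :: nat
  assumes "prob_space rho0"
    and "sets rho0 = sets borel"
    and "compact (msupp rho0)"
    and "at_least_points (n + 1) (msupp rho0)"
  shows "\<forall>t::real.
    ((\<lambda>s. ln (poly_L2norm (rho_t rho0 c k s) (monic_orth_poly (rho_t rho0 c k s) n)))
      has_real_derivative
       (1/2) * (\<Sum>j=1..k. c j *
          (mat_pow_inf (jacobi_matrix (rho_t rho0 c k t)) j (n + 1) (n + 1)
           - mat_pow_inf (jacobi_matrix (rho_t rho0 c k t)) j 1 1))) (at t)"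
proof
  fix t :: real
  interpret sett rho0 c k n by (rule sett.intro[OF assms])
  show "((\<lambda>s. ln (poly_L2norm (rho_t rho0 c k s) (monic_orth_poly (rho_t rho0 c k s) n)))
      has_real_derivative
       (1/2) * (\<Sum>j=1..k. c j *
          (mat_pow_inf (jacobi_matrix (rho_t rho0 c k t)) j (n + 1) (n + 1)
           - mat_pow_inf (jacobi_matrix (rho_t rho0 c k t)) j 1 1))) (at t)"
    by (rule final)
qed

end
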